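(* Let $q\in(0,1)$ and let $\mathbf X_1,\mathbf X_2,\dots$ be i.i.d. random vectors in $\mathbb R^n$ with nonnegative components, distributed as $\mathbf X$, whose log moment generating function $\Lambda(\boldsymbol\lambda)=\log\mathbb E[e^{\langle\boldsymbol\lambda,\mathbf X\rangle}]$ is finite for all $\boldsymbol\lambda\in\mathbb R^n$. Then for every $\delta>0$, $$\lim_{t\to\infty}\frac1t\log\mathsf P\Big(\frac1t\sum_{i=1}^t q^i\mathbf X_i\ge\delta\mathbf 1\Big)=-\infty,$$ where $\mathbf 1$ is the all-ones vector and $\mathbf x\ge\mathbf y$ means $x_j\ge y_j$ for every component $j$. *)

theory Defs
  imports "HOL-Probability.Probability"
begin

text \<open>Extended-real natural logarithm: log 0 = -infinity (Isabelle's ln 0 = 0 would be wrong).\<close>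
definition eln :: "real \<Rightarrow> ereal" where
  "eln x = (if x > 0 then ereal (ln x) else -\<infinity>)"

end

theory Submission
  imports Defs
begin

lemma eln_div_lt:
  fixes p t r :: real
  assumes "t > 0" "p < exp (r * t)"
  shows "eln p / ereal t < ereal r"
proof (cases "p > 0")
  case True
  have "ln p < r * t" using assms True by (metis exp_less_cancel_iff exp_ln)
  hence "ln p / t < r" using assms by (simp add: divide_less_eq)
  thus ?thesis using True assms by (simp add: eln_def ereal_divide)
next
  case False
  thus ?thesis using assms by (simp add: eln_def divide_ereal_def)
qed

lemma tail_bound:
  fixes M :: "'a measure" and Y :: "'a \<Rightarrow> real ^ 'n"
  assumes "prob_space M" "Y \<in> borel_measurable M"
    and "\<forall>l :: real ^ 'n. integrable M (\<lambda>\<omega>. exp (l \<bullet> Y \<omega>))"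
    and "lam > 0"
  shows "measure M {\<omega> \<in> space M. c \<le> Y \<omega> $ j}
          \<le> (\<integral>\<omega>. exp (lam * Y \<omega> $ j) \<partial>M) * exp (- lam * c)"
proof -
  interpret prob_space M by fact
  have eq: "(\<lambda>\<omega>. exp (axis j lam \<bullet> Y \<omega>)) = (\<lambda>\<omega>. exp (lam * Y \<omega> $ j))"
    by (simp add: inner_axis' mult.commute)
  have int: "integrable M (\<lambda>\<omega>. exp (lam * Y \<omega> $ j))"
    using assms(3)[rule_format, of "axis j lam"] eq by simp
  have "{\<omega> \<in> space M. c \<le> Y \<omega> $ j} = {\<omega> \<in> space M. exp (lam * c) \<le> exp (lam * Y \<omega> $ j)}"
    using assms(4) by auto
  also have "measure M \<dots> \<le> (\<integral>\<omega>. exp (lam * Y \<omega> $ j) \<partial>M) / exp (lam * c)"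
    by (rule integral_Markov_inequality_measure[OF int, of "space M"]) auto
  also have "\<dots> = (\<integral>\<omega>. exp (lam * Y \<omega> $ j) \<partial>M) * exp (- lam * c)"
    by (simp add: exp_minus divide_inverse)
  finally show ?thesis .
qed

lemma geom_bound:
  fixes q :: real
  assumes "0 < q" "q < 1"
  shows "(\<Sum>i=1..t. q ^ i) * (1 - q) \<le> 1"
proof -
  have "(\<Sum>i=1..t. q ^ i) * (1 - q) = q - q ^ (t + 1)"
  proof (induction t)
    case 0 show ?case by simp
  next
    case (Suc t)
    have "(\<Sum>i=1..Suc t. q ^ i) * (1 - q) = (\<Sum>i=1..t. q ^ i) * (1 - q) + q ^ Suc t * (1 - q)"
      by (simp add: distrib_right)
    also have "\<dots> = q - q ^ (t + 1) + q ^ Suc t * (1 - q)" using Suc.IH by simp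
    also have "\<dots> = q - q ^ (Suc t + 1)" by (simp add: algebra_simps)
    finally show ?case .
  qed
  thus ?thesis using assms by (smt (verit) zero_le_power)
qed

theorem lemma5:
  fixes M :: "'a measure" and X :: "nat \<Rightarrow> 'a \<Rightarrow> real ^ 'n" and q \<delta> :: real
  assumes "prob_space M"
    and "0 < q" "q < 1"
    and "prob_space.indep_vars M (\<lambda>_. borel) X {1..}"
    and "\<forall>i\<ge>1. distr M borel (X i) = distr M borel (X 1)"
    and "\<forall>i\<ge>1. AE \<omega> in M. \<forall>j. 0 \<le> X i \<omega> $ j"
    and "\<forall>l :: real ^ 'n. integrable M (\<lambda>\<omega>. exp (l \<bullet> X 1 \<omega>))"
    and "\<delta> > 0"
  shows "((\<lambda>t::nat. eln (measure M {\<omega> \<in> space M.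
            \<forall>j. (1 / real t) * (\<Sum>i=1..t. q ^ i * X i \<omega> $ j) \<ge> \<delta>}) / ereal (real t))
          \<longlongrightarrow> -\<infinity>) sequentially"
proof -
  interpret prob_space M by fact
  have meas: "X i \<in> borel_measurable M" if "i \<ge> 1" for i
    using assms(4) that unfolding indep_vars_def by auto
  define j0 :: 'n where "j0 = undefined"
  define a where "a = \<delta> * (1 - q)"
  have a: "a > 0" using assms unfolding a_def by simp
  have setb: "{x::real^'n. c \<le> x $ j0} \<in> sets borel" for c
    by measurable
  have md: "measure M {\<omega> \<in> space M. c \<le> X i \<omega> $ j0} = measure (distr M borel (X i)) {x. c \<le> x $ j0}"
    if "i \<ge> 1" for i c
  proof -
    have "measure (distr M borel (X i)) {x. c \<le> x $ j0} = measure M (X i -` {x. c \<le> x $ j0} \<inter> space M)"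
      by (rule measure_distr[OF meas[OF that] setb])
    also have "X i -` {x. c \<le> x $ j0} \<inter> space M = {\<omega> \<in> space M. c \<le> X i \<omega> $ j0}"
      by blast
    finally show ?thesis by (rule sym)
  qed
  have same: "measure M {\<omega> \<in> space M. c \<le> X i \<omega> $ j0} = measure M {\<omega> \<in> space M. c \<le> X 1 \<omega> $ j0}"
    if "i \<ge> 1" for i c
  proof -
    have d: "distr M borel (X i) = distr M borel (X 1)" using assms(5) that by blast
    show ?thesis unfolding md[OF that] md[OF order_refl] d ..
  qed
  show ?thesis
    unfolding tendsto_MInfty
  proof
    fix r :: real
    define lam where "lam = (\<bar>r\<bar> + 2) / a"
    have lam: "lam > 0" using a unfolding lam_def by simp
    define C where "C = (\<integral>\<omega>. exp (lam * X 1 \<omega> $ j0) \<partial>M)"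
    have bound: "measure M {\<omega> \<in> space M. \<forall>j. (1 / real t) * (\<Sum>i=1..t. q ^ i * X i \<omega> $ j) \<ge> \<delta>}
          \<le> real t * (C * exp (- (\<bar>r\<bar> + 2) * real t))" if t: "t \<ge> 1" for t :: nat
    proof -
      define B where "B i = {\<omega> \<in> space M. real t * a \<le> X i \<omega> $ j0}" for i
      have sub: "{\<omega> \<in> space M. \<forall>j. (1 / real t) * (\<Sum>i=1..t. q ^ i * X i \<omega> $ j) \<ge> \<delta>}
                 \<subseteq> (\<Union>i\<in>{1..t}. B i)"
      proof
        fix \<omega> assume w: "\<omega> \<in> {\<omega> \<in> space M. \<forall>j. (1 / real t) * (\<Sum>i=1..t. q ^ i * X i \<omega> $ j) \<ge> \<delta>}"
        hence "(1 / real t) * (\<Sum>i=1..t. q ^ i * X i \<omega> $ j0) \<ge> \<delta>" by auto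
        hence ge: "(\<Sum>i=1..t. q ^ i * X i \<omega> $ j0) \<ge> real t * \<delta>"
          using t by (simp add: field_simps)
        show "\<omega> \<in> (\<Union>i\<in>{1..t}. B i)"
        proof (rule ccontr)
          assume "\<omega> \<notin> (\<Union>i\<in>{1..t}. B i)"
          hence lt: "\<forall>i\<in>{1..t}. X i \<omega> $ j0 < real t * a" using w unfolding B_def by auto
          have "(\<Sum>i=1..t. q ^ i * X i \<omega> $ j0) < (\<Sum>i=1..t. q ^ i * (real t * a))"
            apply (rule sum_strict_mono)
            using t lt assms(2) by auto
          also have "\<dots> = real t * \<delta> * ((\<Sum>i=1..t. q ^ i) * (1 - q))"
            unfolding a_def sum_distrib_right[symmetric] by (simp only: mult.assoc mult.commute mult.left_commute)
          also have "\<dots> \<le> real t * \<delta>"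
            using geom_bound[OF assms(2,3), of t] assms(8)
            by (simp add: mult_left_le)
          finally show False using ge by simp
        qed
      qed
      have Bs: "B i \<in> sets M" if "i \<ge> 1" for i
        unfolding B_def using meas[OF that] by measurable
      have "measure M {\<omega> \<in> space M. \<forall>j. (1 / real t) * (\<Sum>i=1..t. q ^ i * X i \<omega> $ j) \<ge> \<delta>}
            \<le> measure M (\<Union>i\<in>{1..t}. B i)"
        by (rule finite_measure_mono[OF sub]) (use Bs in auto)
      also have "\<dots> \<le> (\<Sum>i\<in>{1..t}. measure M (B i))"
        by (rule finite_measure_subadditive_finite) (use Bs in auto)
      also have "\<dots> = (\<Sum>i\<in>{1..t}. measure M (B 1))"
        unfolding B_def by (intro sum.cong refl) (rule same, simp)
      also have "\<dots> = real t * measure M (B 1)" by simp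
      also have "\<dots> \<le> real t * (C * exp (- (\<bar>r\<bar> + 2) * real t))"
      proof (rule mult_left_mono)
        have "measure M (B 1) \<le> C * exp (- lam * (real t * a))"
          unfolding B_def C_def
          by (rule tail_bound[OF assms(1) meas[OF order_refl] assms(7) lam])
        also have "- lam * (real t * a) = - (\<bar>r\<bar> + 2) * real t"
          using a unfolding lam_def by (simp add: field_simps)
        finally show "measure M (B 1) \<le> C * exp (- (\<bar>r\<bar> + 2) * real t)" .
      qed simp
      finally show ?thesis .
    qed
    show "\<forall>\<^sub>F t in sequentially. eln (measure M {\<omega> \<in> space M.
            \<forall>j. (1 / real t) * (\<Sum>i=1..t. q ^ i * X i \<omega> $ j) \<ge> \<delta>}) / ereal (real t) < ereal r"
      unfolding eventually_sequentially
    proof (intro exI allI impI)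
      fix t :: nat assume t: "t \<ge> max 1 (nat \<lceil>C\<rceil>)"
      have t1: "t \<ge> 1" using t by simp
      have tC: "C \<le> real t" using t by linarith
      have "real t * (C * exp (- (\<bar>r\<bar> + 2) * real t)) < exp (r * real t)"
      proof -
        have "real t * C \<le> real t * real t" using tC by (simp add: mult_left_mono)
        also have "\<dots> < (1 + real t) ^ 2" by (simp add: power2_eq_square algebra_simps)
        also have "\<dots> \<le> exp (real t) ^ 2"
          by (rule power_mono) (use exp_ge_add_one_self[of "real t"] in auto)
        also have "\<dots> = exp (2 * real t)" by (simp add: exp_double[symmetric])
        also have "\<dots> \<le> exp ((r + \<bar>r\<bar> + 2) * real t)"
          using mult_nonneg_nonneg[of "r + \<bar>r\<bar>" "real t"] by (simp add: algebra_simps)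
        finally have "real t * C < exp ((r + \<bar>r\<bar> + 2) * real t)" .
        hence "real t * C * exp (- (\<bar>r\<bar> + 2) * real t)
               < exp ((r + \<bar>r\<bar> + 2) * real t) * exp (- (\<bar>r\<bar> + 2) * real t)"
          by simp
        also have "\<dots> = exp (r * real t)" by (simp add: exp_add[symmetric] algebra_simps)
        finally show ?thesis by (simp add: mult.assoc)
      qed
      with bound[OF t1] show "eln (measure M {\<omega> \<in> space M.
            \<forall>j. (1 / real t) * (\<Sum>i=1..t. q ^ i * X i \<omega> $ j) \<ge> \<delta>}) / ereal (real t) < ereal r"
        using t1 by (intro eln_div_lt) auto
    qed
  qed
qed

end
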